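(* In the retraining process below, with $\beta=\alpha\big((1+\tfrac1N)\alpha-\tfrac1N\big)$, for every $r\ge0$, $$S^{(r+1)}=\frac{\frac1N(1+2\alpha)+(1-\frac1N)(1+\alpha)S^{(0)}}{1+(1+\frac1N)\alpha}-\frac1N\Big(1-\frac1N\Big)\frac{(1-S^{(0)})\,\alpha\,\beta^{r}}{1+(1+\frac1N)\alpha},$$ and moreover, for each $k\in[s]$, $\nu_k^{(r)}:=\mathbb E[(p^{(r)}_k)^2]$ satisfies $$\nu_k^{(r+1)}=\frac{p^{(0)}_k}{N}\cdot\frac{1+2\alpha-(1-\frac1N)\alpha\beta^{r}}{1+(1+\frac1N)\alpha}+\Big(1-\frac1N\Big)(p^{(0)}_k)^2\cdot\frac{1+\alpha+\frac{\alpha}{N}\beta^{r}}{1+(1+\frac1N)\alpha}.$$ If $N>1$ and $\hat N>1$ then $\beta\in(0,1)$.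
   Context: Fix integers $s\ge2$, $N\ge1$, $\hat N\ge1$, let $\alpha=\hat N/(N+\hat N)$, and let $\mathbf p^{(0)}\in\Delta_s$ (probability simplex) with $S^{(0)}:=\|\mathbf p^{(0)}\|_2^2=\sum_k(p^{(0)}_k)^2$. Let $\mathbf e_1,\dots,\mathbf e_s$ be the standard basis of $\mathbb{R}^s$. Draw organic tokens $\mathbf z^{(0)}_1,\dots,\mathbf z^{(0)}_N$ i.i.d. with $\Pr(\mathbf z^{(0)}_n=\mathbf e_k)=p^{(0)}_k$; this same organic sample is used in every round. Set $\mathbf p^{(1)}=\frac1N\sum_{n=1}^N\mathbf z^{(0)}_n$. For $r\ge2$, conditionally on everything generated so far draw $\mathbf z^{(r-1)}_1,\dots,\mathbf z^{(r-1)}_{\hat N}$ i.i.d. with $\Pr(\mathbf z^{(r-1)}_n=\mathbf e_k)=p^{(r-1)}_k$, and set $\mathbf p^{(r)}=\frac{1}{N+\hat N}\big(\sum_{n=1}^N\mathbf z^{(0)}_n+\sum_{n=1}^{\hat N}\mathbf z^{(r-1)}_n\big)$. Let $S^{(r)}=\mathbb E[\|\mathbf p^{(r)}\|_2^2]$ for $r\ge1$. *)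

theory Defs
  imports "HOL-Probability.Probability"
begin

text \<open>Tokens are the elements of a finite type 'k (standing for the standard basis
  vectors e_1..e_s, s = CARD('k)); a probability vector is a function 'k => real.\<close>

definition token_pmf :: "('k::finite \<Rightarrow> real) \<Rightarrow> 'k pmf" where
  "token_pmf p = embed_pmf p"

definition cnt :: "'k list \<Rightarrow> 'k \<Rightarrow> real" where
  "cnt xs k = real (length (filter (\<lambda>x. x = k) xs))"

text \<open>Distribution of p^(r) (r >= 1) conditionally on the fixed organic sample zs.\<close>
fun cond_proc :: "nat \<Rightarrow> nat \<Rightarrow> 'k::finite list \<Rightarrow> nat \<Rightarrow> ('k \<Rightarrow> real) pmf" where
  "cond_proc N Nh zs 0 = return_pmf (\<lambda>k. 0)"
| "cond_proc N Nh zs (Suc 0) = return_pmf (\<lambda>k. cnt zs k / real N)"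
| "cond_proc N Nh zs (Suc (Suc r)) =
     bind_pmf (cond_proc N Nh zs (Suc r)) (\<lambda>q.
       bind_pmf (replicate_pmf Nh (token_pmf q)) (\<lambda>ys.
         return_pmf (\<lambda>k. (cnt zs k + cnt ys k) / (real N + real Nh))))"

text \<open>Law of p^(r) for r >= 1 (organic sample drawn once, i.i.d. from p0).\<close>
definition proc :: "nat \<Rightarrow> nat \<Rightarrow> ('k::finite \<Rightarrow> real) \<Rightarrow> nat \<Rightarrow> ('k \<Rightarrow> real) pmf" where
  "proc N Nh p0 r = bind_pmf (replicate_pmf N (token_pmf p0)) (\<lambda>zs. cond_proc N Nh zs r)"

definition S_r :: "nat \<Rightarrow> nat \<Rightarrow> ('k::finite \<Rightarrow> real) \<Rightarrow> nat \<Rightarrow> real" where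
  "S_r N Nh p0 r = measure_pmf.expectation (proc N Nh p0 r) (\<lambda>p. \<Sum>k\<in>UNIV. (p k)^2)"

definition nu_r :: "nat \<Rightarrow> nat \<Rightarrow> ('k::finite \<Rightarrow> real) \<Rightarrow> nat \<Rightarrow> 'k \<Rightarrow> real" where
  "nu_r N Nh p0 r k = measure_pmf.expectation (proc N Nh p0 r) (\<lambda>p. (p k)^2)"

end

theory Submission
  imports Defs
begin

lemma exp_bind:
  fixes f :: "'b \<Rightarrow> real"
  assumes fin: "finite (set_pmf M)" and finK: "\<And>x. x \<in> set_pmf M \<Longrightarrow> finite (set_pmf (K x))"
    and eq: "\<And>x. x \<in> set_pmf M \<Longrightarrow> measure_pmf.expectation (K x) f = g x"
  shows "measure_pmf.expectation (bind_pmf M K) f = measure_pmf.expectation M g"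
proof -
  define A where "A = set_pmf (bind_pmf M K)"
  have finA: "finite A" unfolding A_def set_bind_pmf by (rule finite_UN_I[OF fin finK])
  have sub: "\<And>x. x \<in> set_pmf M \<Longrightarrow> set_pmf (K x) \<subseteq> A" unfolding A_def by auto
  have "measure_pmf.expectation (bind_pmf M K) f = (\<Sum>a\<in>A. f a * pmf (bind_pmf M K) a)"
    by (rule integral_measure_pmf_real) (use finA in \<open>auto simp: A_def\<close>)
  also have "\<dots> = (\<Sum>a\<in>A. f a * (\<Sum>x\<in>set_pmf M. pmf (K x) a * pmf M x))"
  proof (rule sum.cong[OF refl])
    fix a
    have "pmf (bind_pmf M K) a = measure_pmf.expectation M (\<lambda>x. pmf (K x) a)" by (rule pmf_bind)
    also have "\<dots> = (\<Sum>x\<in>set_pmf M. pmf (K x) a * pmf M x)"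
      by (rule integral_measure_pmf_real) (auto simp: fin)
    finally show "f a * pmf (bind_pmf M K) a = f a * (\<Sum>x\<in>set_pmf M. pmf (K x) a * pmf M x)" by simp
  qed
  also have "\<dots> = (\<Sum>x\<in>set_pmf M. (\<Sum>a\<in>A. f a * pmf (K x) a) * pmf M x)"
    unfolding sum_distrib_left sum_distrib_right by (subst sum.swap) (simp add: mult_ac)
  also have "\<dots> = (\<Sum>x\<in>set_pmf M. g x * pmf M x)"
  proof (rule sum.cong[OF refl])
    fix x assume x: "x \<in> set_pmf M"
    have "g x = measure_pmf.expectation (K x) f" using eq[OF x] by simp
    also have "\<dots> = (\<Sum>a\<in>A. f a * pmf (K x) a)"
      by (rule integral_measure_pmf_real) (use sub[OF x] finA in \<open>auto simp: set_pmf_eq\<close>)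
    finally show "(\<Sum>a\<in>A. f a * pmf (K x) a) * pmf M x = g x * pmf M x" by simp
  qed
  also have "\<dots> = measure_pmf.expectation M g"
    by (rule integral_measure_pmf_real[symmetric]) (auto simp: fin)
  finally show ?thesis .
qed

lemma fin_rep: "finite (set_pmf (replicate_pmf n (P :: 'k::finite pmf)))"
proof -
  have "set_pmf (replicate_pmf n P) \<subseteq> {xs. set xs \<subseteq> UNIV \<and> length xs = n}"
    by (auto simp: set_replicate_pmf)
  moreover have "finite {xs. set xs \<subseteq> (UNIV::'k set) \<and> length xs = n}"
    by (rule finite_lists_length_eq) simp
  ultimately show ?thesis by (rule finite_subset)
qed

lemma fin_pmf: "finite (set_pmf (P :: 'k::finite pmf))" by simp

lemma cnt_Cons: "cnt (x#xs) k = (if x = k then 1 else 0) + cnt xs k"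
  by (simp add: cnt_def)

lemma exp_finite_lin:
  fixes f g :: "'a \<Rightarrow> real"
  assumes "finite (set_pmf M)"
  shows "measure_pmf.expectation M (\<lambda>x. f x + g x) = measure_pmf.expectation M f + measure_pmf.expectation M g"
    and "measure_pmf.expectation M (\<lambda>x. c * f x) = c * measure_pmf.expectation M f"
    and "measure_pmf.expectation M (\<lambda>x. c) = c"
  using assms by (auto intro!: Bochner_Integration.integral_add integrable_measure_pmf_finite)

lemma exp_ind: "measure_pmf.expectation (P :: 'k::finite pmf) (\<lambda>x. if x = k then 1 else 0) = pmf P k"
  by (subst integral_measure_pmf_real[where A="{k}"]) (auto split: if_splits)

lemma cnt_mom:
  fixes P :: "'k::finite pmf"
  shows "measure_pmf.expectation (replicate_pmf n P) (\<lambda>xs. cnt xs k) = real n * pmf P k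
       \<and> measure_pmf.expectation (replicate_pmf n P) (\<lambda>xs. (cnt xs k)^2)
           = real n * pmf P k + real n * (real n - 1) * (pmf P k)^2"
proof (induction n)
  case 0
  then show ?case by (simp add: cnt_def)
next
  case (Suc n)
  let ?p = "pmf P k"
  have E1: "measure_pmf.expectation (replicate_pmf (Suc n) P) (\<lambda>xs. cnt xs k)
      = measure_pmf.expectation P (\<lambda>x. (if x = k then 1 else 0) + real n * ?p)"
    unfolding replicate_pmf.simps
  proof (rule exp_bind)
    fix x
    show "measure_pmf.expectation (replicate_pmf n P \<bind> (\<lambda>xs. return_pmf (x # xs))) (\<lambda>xs. cnt xs k)
       = (if x = k then 1 else 0) + real n * ?p"
      by (subst exp_bind[where g="\<lambda>xs. cnt (x#xs) k"]) (auto simp: fin_rep cnt_Cons exp_finite_lin Suc.IH)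
  qed (auto simp: fin_rep)
  have E2: "measure_pmf.expectation (replicate_pmf (Suc n) P) (\<lambda>xs. (cnt xs k)^2)
      = measure_pmf.expectation P (\<lambda>x. (if x = k then 1 else 0) + 2 * (if x = k then 1 else 0) * (real n * ?p)
           + (real n * ?p + real n * (real n - 1) * ?p^2))"
    unfolding replicate_pmf.simps
  proof (rule exp_bind)
    fix x
    have "(\<lambda>xs. (cnt (x#xs) k)^2) = (\<lambda>xs. (if x = k then 1 else 0) + (2 * (if x = k then 1 else 0)) * cnt xs k + (cnt xs k)^2)"
      by (auto simp: cnt_Cons power2_eq_square algebra_simps)
    then show "measure_pmf.expectation (replicate_pmf n P \<bind> (\<lambda>xs. return_pmf (x # xs))) (\<lambda>xs. (cnt xs k)^2)
       = (if x = k then 1 else 0) + 2 * (if x = k then 1 else 0) * (real n * ?p)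
           + (real n * ?p + real n * (real n - 1) * ?p^2)"
      by (subst exp_bind[where g="\<lambda>xs. (cnt (x#xs) k)^2"]) (auto simp: fin_rep exp_finite_lin Suc.IH)
  qed (auto simp: fin_rep)
  have a: "measure_pmf.expectation P (\<lambda>x. (if x = k then 1 else 0) + real n * ?p) = ?p + real n * ?p"
    by (simp add: exp_finite_lin exp_ind)
  have b: "measure_pmf.expectation P (\<lambda>x. (if x = k then 1 else 0) + 2 * (if x = k then 1 else 0) * (real n * ?p)
           + (real n * ?p + real n * (real n - 1) * ?p^2)) = ?p + 2 * ?p * (real n * ?p) + (real n * ?p + real n * (real n - 1) * ?p^2)"
    by (simp add: exp_finite_lin exp_ind mult.assoc)
  show ?case using E1 E2 a b by (simp add: algebra_simps power2_eq_square)
qed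

lemma sum_cnt: "(\<Sum>k\<in>UNIV. cnt xs (k::'k::finite)) = real (length xs)"
proof (induction xs)
  case Nil then show ?case by (simp add: cnt_def)
next
  case (Cons x xs)
  have "(\<Sum>k\<in>UNIV. cnt (x#xs) k) = (\<Sum>k\<in>UNIV. (if x = k then 1 else 0)) + (\<Sum>k\<in>UNIV. cnt xs k)"
    unfolding cnt_Cons by (rule sum.distrib)
  also have "(\<Sum>k\<in>UNIV. (if x = k then 1 else 0::real)) = 1" by (simp add: sum.delta)
  finally show ?case using Cons by simp
qed

lemma cnt_nonneg: "cnt xs k \<ge> 0" by (simp add: cnt_def)

definition probv :: "('k::finite \<Rightarrow> real) \<Rightarrow> bool" where
  "probv q \<longleftrightarrow> (\<forall>k. q k \<ge> 0) \<and> (\<Sum>k\<in>UNIV. q k) = 1"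

lemma pmf_token: assumes "probv q" shows "pmf (token_pmf q) k = q k"
proof -
  have nn: "\<And>x. 0 \<le> q x" using assms by (auto simp: probv_def)
  have "(\<integral>\<^sup>+x. ennreal (q x) \<partial>count_space UNIV) = ennreal (\<Sum>x\<in>UNIV. q x)"
    by (simp add: nn_integral_count_space_finite sum_ennreal nn)
  also have "\<dots> = 1" using assms by (simp add: probv_def)
  finally show ?thesis unfolding token_pmf_def by (rule pmf_embed_pmf[OF nn])
qed

lemma cond_supp:
  assumes "length zs = N" "N \<ge> 1"
  shows "finite (set_pmf (cond_proc N Nh zs r)) \<and> (\<forall>q\<in>set_pmf (cond_proc N Nh zs (Suc r)). probv q)"
proof (induction r rule: nat.induct)
  case zero
  then show ?case using assms by (auto simp: probv_def sum_divide_distrib[symmetric] sum_cnt cnt_nonneg)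
next
  case (Suc r)
  have fin: "finite (set_pmf (cond_proc N Nh zs (Suc r)))"
    using Suc by (cases r) (auto intro!: finite_UN_I fin_rep)
  show ?case
  proof
    show "finite (set_pmf (cond_proc N Nh zs (Suc r)))" by (rule fin)
    show "\<forall>q\<in>set_pmf (cond_proc N Nh zs (Suc (Suc r))). probv q"
    proof (auto simp: set_replicate_pmf)
      fix q ys
      show "probv (\<lambda>k. (cnt zs k + cnt ys k) / (real N + real (length ys)))"
        using assms
        by (auto simp: probv_def sum_divide_distrib[symmetric] sum_cnt cnt_nonneg sum.distrib)
    qed
  qed
qed

lemma cond_mom:
  fixes zs :: "'k::finite list" and k :: 'k
  assumes len: "length zs = N" and N1: "N \<ge> 1" and H1: "Nh \<ge> 1"
  defines "n \<equiv> real N" and "h \<equiv> real Nh"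
  defines "a \<equiv> cnt zs k / n"
  defines "b \<equiv> h * (h - 1) / (n + h)^2"
  defines "vs \<equiv> (n * (n + 2 * h) * a^2 + h * a) / (n^2 + 2 * n * h + h)"
  shows "measure_pmf.expectation (cond_proc N Nh zs (Suc r)) (\<lambda>q. q k) = a
       \<and> measure_pmf.expectation (cond_proc N Nh zs (Suc r)) (\<lambda>q. (q k)^2) = vs + b^r * (a^2 - vs)"
proof (induction r)
  case 0
  then show ?case by (simp add: a_def n_def)
next
  case (Suc r)
  have npos: "n > 0" "h > 0" using N1 H1 by (auto simp: n_def h_def)
  have c: "cnt zs k = n * a" using npos by (simp add: a_def)
  let ?M = "cond_proc N Nh zs (Suc r)"
  have finM: "finite (set_pmf ?M)" and pv: "\<And>q. q \<in> set_pmf ?M \<Longrightarrow> probv q"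
    using cond_supp[OF len N1, of Nh r] cond_supp[OF len N1, of Nh "Suc r"] by auto
  have inner: "measure_pmf.expectation (replicate_pmf Nh (token_pmf q) \<bind>
            (\<lambda>ys. return_pmf (\<lambda>k. (cnt zs k + cnt ys k) / (real N + real Nh)))) (\<lambda>q. f (q k))
        = measure_pmf.expectation (replicate_pmf Nh (token_pmf q)) (\<lambda>ys. f ((n * a + cnt ys k) / (n + h)))"
    for q and f :: "real \<Rightarrow> real"
    by (rule exp_bind) (auto simp: fin_rep c n_def h_def)
  have E1: "measure_pmf.expectation (cond_proc N Nh zs (Suc (Suc r))) (\<lambda>q. q k)
      = measure_pmf.expectation ?M (\<lambda>q. (n * a) / (n + h) + h / (n + h) * q k)"
    unfolding cond_proc.simps
  proof (rule exp_bind[OF finM])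
    fix q assume q: "q \<in> set_pmf ?M"
    have "measure_pmf.expectation (replicate_pmf Nh (token_pmf q)) (\<lambda>ys. (n * a + cnt ys k) / (n + h))
       = measure_pmf.expectation (replicate_pmf Nh (token_pmf q)) (\<lambda>ys. (n * a) / (n + h) + 1 / (n + h) * cnt ys k)"
      by (simp add: add_divide_distrib)
    also have "\<dots> = (n * a) / (n + h) + h / (n + h) * q k"
      using cnt_mom[of Nh "token_pmf q" k] pmf_token[OF pv[OF q]]
      by (simp add: exp_finite_lin fin_rep h_def)
    finally show "measure_pmf.expectation (replicate_pmf Nh (token_pmf q) \<bind>
            (\<lambda>ys. return_pmf (\<lambda>k. (cnt zs k + cnt ys k) / (real N + real Nh)))) (\<lambda>q. q k)
       = (n * a) / (n + h) + h / (n + h) * q k"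
      using inner[of q "\<lambda>x. x"] by simp
  qed (auto intro!: finite_UN_I fin_rep)
  have E2: "measure_pmf.expectation (cond_proc N Nh zs (Suc (Suc r))) (\<lambda>q. (q k)^2)
      = measure_pmf.expectation ?M (\<lambda>q. (n * a)^2 / (n + h)^2 + (2 * n * a * h + h) / (n + h)^2 * q k
            + h * (h - 1) / (n + h)^2 * (q k)^2)"
    unfolding cond_proc.simps
  proof (rule exp_bind[OF finM])
    fix q assume q: "q \<in> set_pmf ?M"
    have "measure_pmf.expectation (replicate_pmf Nh (token_pmf q)) (\<lambda>ys. ((n * a + cnt ys k) / (n + h))^2)
       = measure_pmf.expectation (replicate_pmf Nh (token_pmf q))
           (\<lambda>ys. (n * a)^2 / (n + h)^2 + (2 * n * a / (n + h)^2) * cnt ys k + (1 / (n + h)^2) * (cnt ys k)^2)"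
      using npos by (intro arg_cong[where f="measure_pmf.expectation _"] ext) (simp add: field_simps power2_sum, simp only: add_divide_distrib)
    also have "\<dots> = (n * a)^2 / (n + h)^2 + (2 * n * a / (n + h)^2) * (h * q k)
          + (1 / (n + h)^2) * (h * q k + h * (h - 1) * (q k)^2)"
      using cnt_mom[of Nh "token_pmf q" k] pmf_token[OF pv[OF q]]
      by (simp add: exp_finite_lin fin_rep h_def)
    also have "\<dots> = (n * a)^2 / (n + h)^2 + (2 * n * a * h + h) / (n + h)^2 * q k
            + h * (h - 1) / (n + h)^2 * (q k)^2"
      using npos by (simp add: field_simps)
    finally show "measure_pmf.expectation (replicate_pmf Nh (token_pmf q) \<bind>
            (\<lambda>ys. return_pmf (\<lambda>k. (cnt zs k + cnt ys k) / (real N + real Nh)))) (\<lambda>q. (q k)^2)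
       = (n * a)^2 / (n + h)^2 + (2 * n * a * h + h) / (n + h)^2 * q k
            + h * (h - 1) / (n + h)^2 * (q k)^2"
      using inner[of q "\<lambda>x. x^2"] by simp
  qed (auto intro!: finite_UN_I fin_rep)
  have m1: "measure_pmf.expectation (cond_proc N Nh zs (Suc (Suc r))) (\<lambda>q. q k) = a"
  proof -
    have T: "n + h \<noteq> 0" using npos by simp
    have "n * a / (n + h) + h / (n + h) * a = (a * (n + h)) / (n + h)"
      by (simp add: add_divide_distrib distrib_left mult.commute)
    then have "n * a / (n + h) + h / (n + h) * a = a" using T by simp
    then show ?thesis unfolding E1 using Suc.IH by (simp add: exp_finite_lin finM)
  qed
  have "measure_pmf.expectation (cond_proc N Nh zs (Suc (Suc r))) (\<lambda>q. (q k)^2)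
     = (n * a)^2 / (n + h)^2 + (2 * n * a * h + h) / (n + h)^2 * a
            + h * (h - 1) / (n + h)^2 * (vs + b^r * (a^2 - vs))"
    unfolding E2 using Suc.IH by (simp add: exp_finite_lin finM)
  also have "\<dots> = vs + b^Suc r * (a^2 - vs)"
  proof -
    have d: "n^2 + 2 * n * h + h > 0" using npos by (simp add: add_pos_pos)
    have T2: "(n + h)^2 > 0" using npos by simp
    have omb: "1 - b = (n^2 + 2 * n * h + h) / (n + h)^2"
      unfolding b_def using T2 by (simp add: field_simps power2_eq_square)
    have key: "(n * a)^2 / (n + h)^2 + (2 * n * a * h + h) / (n + h)^2 * a = vs * (1 - b)"
    proof -
      have l: "(n * a)^2 / (n + h)^2 + (2 * n * a * h + h) / (n + h)^2 * a = (n * (n + 2 * h) * a^2 + h * a) / (n + h)^2"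
        by (simp add: add_divide_distrib power2_eq_square algebra_simps)
      have r: "vs * (1 - b) = (n * (n + 2 * h) * a^2 + h * a) / (n + h)^2"
        unfolding omb vs_def using d by simp
      show ?thesis using l r by simp
    qed
    have bb: "h * (h - 1) / (n + h)^2 = b" by (simp add: b_def)
    show ?thesis unfolding bb key by (simp add: algebra_simps)
  qed
  finally show ?case using m1 by simp
qed

lemma alg_nu:
  fixes n h p B :: real
  assumes n: "n > 0" and h: "h > 0"
  defines "D \<equiv> n^2 + 2 * n * h + h"
  defines "\<alpha> \<equiv> h / (n + h)"
  shows "(n * (n + 2 * h) / D * (1 - B) + B) / n^2 * (n * p + n * (n - 1) * p^2) + h / D * (1 - B) / n * (n * p)
    = (p / n) * ((1 + 2 * \<alpha> - (1 - 1 / n) * \<alpha> * B) / (1 + (1 + 1 / n) * \<alpha>))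
      + (1 - 1 / n) * p^2 * ((1 + \<alpha> + (\<alpha> / n) * B) / (1 + (1 + 1 / n) * \<alpha>))"
proof -
  have d: "D > 0" unfolding D_def using n h by (simp add: add_pos_pos)
  have q: "h * (h * n) + (n * (n * n) + h * (n * (n * 2))) > 0" "h * n + n * n > 0" using n h by (intro add_pos_pos mult_pos_pos; simp)+
  have a: "n + h \<noteq> 0" "n \<noteq> 0" "h * n + n * n \<noteq> 0" "h * (h * n) + (n * (n * n) + h * (n * (n * 2))) \<noteq> 0" "n * (n + h) \<noteq> 0" using n h q by auto
  have den: "1 + (1 + 1 / n) * \<alpha> = D / (n * (n + h))"
    unfolding D_def \<alpha>_def using a by (simp add: field_simps power2_eq_square)
  have t1: "1 + 2 * \<alpha> - (1 - 1 / n) * \<alpha> * B = (n * (n + h) + 2 * n * h - (n - 1) * h * B) / (n * (n + h))"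
    unfolding \<alpha>_def using a by (simp add: field_simps)
  have t2: "1 + \<alpha> + (\<alpha> / n) * B = (n * (n + h) + n * h + h * B) / (n * (n + h))"
    unfolding \<alpha>_def using a by (simp add: field_simps)
  have r1: "(n * (n + h) + 2 * n * h - (n - 1) * h * B) / (n * (n + h)) / (D / (n * (n + h)))
     = (n * (n + h) + 2 * n * h - (n - 1) * h * B) / D" using a d by simp
  have r2: "(n * (n + h) + n * h + h * B) / (n * (n + h)) / (D / (n * (n + h)))
     = (n * (n + h) + n * h + h * B) / D" using a d by simp
  have "D * n^2 * ((n * (n + 2 * h) / D * (1 - B) + B) / n^2 * (n * p + n * (n - 1) * p^2) + h / D * (1 - B) / n * (n * p))
     = (n * (n + 2 * h) * (1 - B) + B * D) * (n * p + n * (n - 1) * p^2) + n^2 * h * (1 - B) * p"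
    using a d by (simp add: field_simps power2_eq_square)
  also have "\<dots> = D * n^2 * ((p / n) * ((n * (n + h) + 2 * n * h - (n - 1) * h * B) / D)
      + (1 - 1 / n) * p^2 * ((n * (n + h) + n * h + h * B) / D))"
    using a d by (simp add: field_simps power2_eq_square) (simp add: D_def algebra_simps power2_eq_square)
  finally show ?thesis unfolding den t1 t2 r1 r2 using a d by simp
qed

lemma main_nu:
  fixes p0 :: "'k::finite \<Rightarrow> real" and N Nh :: nat and k :: 'k
  assumes N1: "N \<ge> 1" and H1: "Nh \<ge> 1" and pv: "probv p0"
  defines "n \<equiv> real N" and "h \<equiv> real Nh"
  defines "b \<equiv> h * (h - 1) / (n + h)^2"
  defines "D \<equiv> n^2 + 2 * n * h + h"
  shows "nu_r N Nh p0 (Suc r) k = (n * (n + 2 * h) / D * (1 - b^r) + b^r) / n^2 * (n * p0 k + n * (n - 1) * (p0 k)^2)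
           + h / D * (1 - b^r) / n * (n * p0 k)"
proof -
  have npos: "n > 0" "h > 0" using N1 H1 by (auto simp: n_def h_def)
  have d: "D > 0" unfolding D_def using npos by (simp add: add_pos_pos)
  let ?R = "replicate_pmf N (token_pmf p0)"
  let ?C2 = "(n * (n + 2 * h) / D * (1 - b^r) + b^r) / n^2"
  let ?C1 = "h / D * (1 - b^r) / n"
  have "nu_r N Nh p0 (Suc r) k = measure_pmf.expectation ?R (\<lambda>zs. ?C2 * (cnt zs k)^2 + ?C1 * cnt zs k)"
    unfolding nu_r_def proc_def
  proof (rule exp_bind)
    fix zs assume zs: "zs \<in> set_pmf ?R"
    then have len: "length zs = N" by (simp add: set_replicate_pmf)
    show "finite (set_pmf (cond_proc N Nh zs (Suc r)))" using cond_supp[OF len N1] by blast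
    have "measure_pmf.expectation (cond_proc N Nh zs (Suc r)) (\<lambda>p. (p k)^2)
       = (n * (n + 2 * h) * (cnt zs k / n)^2 + h * (cnt zs k / n)) / (n^2 + 2 * n * h + h)
         + b^r * ((cnt zs k / n)^2 - (n * (n + 2 * h) * (cnt zs k / n)^2 + h * (cnt zs k / n)) / (n^2 + 2 * n * h + h))"
      using cond_mom[OF len N1 H1, where k=k and r=r] unfolding n_def h_def b_def by blast
    also have "\<dots> = ?C2 * (cnt zs k)^2 + ?C1 * cnt zs k"
      unfolding D_def[symmetric] using npos d by (simp add: field_simps power2_eq_square)
    finally show "measure_pmf.expectation (cond_proc N Nh zs (Suc r)) (\<lambda>p. (p k)^2)
       = ?C2 * (cnt zs k)^2 + ?C1 * cnt zs k" .
  qed (simp add: fin_rep)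
  also have "\<dots> = ?C2 * (n * p0 k + n * (n - 1) * (p0 k)^2) + ?C1 * (n * p0 k)"
    using cnt_mom[of N "token_pmf p0" k] pmf_token[OF pv] by (simp add: exp_finite_lin fin_rep n_def)
  finally show ?thesis .
qed


theorem mainTheorem8:
  fixes p0 :: "'k::finite \<Rightarrow> real" and N Nh :: nat
  assumes "CARD('k) \<ge> 2" and "N \<ge> 1" and "Nh \<ge> 1"
    and "\<And>k. p0 k \<ge> 0" and "(\<Sum>k\<in>UNIV. p0 k) = 1"
  defines "\<alpha> \<equiv> real Nh / (real N + real Nh)"
  defines "\<beta> \<equiv> \<alpha> * ((1 + 1 / real N) * \<alpha> - 1 / real N)"
  defines "S0 \<equiv> (\<Sum>k\<in>UNIV. (p0 k)^2)"
  shows "(\<forall>r. S_r N Nh p0 (r + 1) =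
            ((1 / real N) * (1 + 2 * \<alpha>) + (1 - 1 / real N) * (1 + \<alpha>) * S0)
              / (1 + (1 + 1 / real N) * \<alpha>)
            - (1 / real N) * (1 - 1 / real N) * ((1 - S0) * \<alpha> * \<beta> ^ r)
              / (1 + (1 + 1 / real N) * \<alpha>))
       \<and> (\<forall>r k. nu_r N Nh p0 (r + 1) k =
            (p0 k / real N) * ((1 + 2 * \<alpha> - (1 - 1 / real N) * \<alpha> * \<beta> ^ r)
              / (1 + (1 + 1 / real N) * \<alpha>))
            + (1 - 1 / real N) * (p0 k)^2 * ((1 + \<alpha> + (\<alpha> / real N) * \<beta> ^ r)
              / (1 + (1 + 1 / real N) * \<alpha>)))
       \<and> (N > 1 \<and> Nh > 1 \<longrightarrow> 0 < \<beta> \<and> \<beta> < 1)"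
proof -
  define n where "n = real N"
  define h where "h = real Nh"
  have npos: "n > 0" "h > 0" using assms(2,3) by (auto simp: n_def h_def)
  have pv: "probv p0" using assms(4,5) by (simp add: probv_def)
  have al: "\<alpha> = h / (n + h)" by (simp add: \<alpha>_def n_def h_def)
  have beq: "\<beta> = h * (h - 1) / (n + h)^2"
  proof -
    have q: "h * n + n * n > 0" "n + h > 0" "h * (n * n) + n * (n * n) > 0" using npos by (intro add_pos_pos mult_pos_pos; simp)+
    have e: "(1 + 1 / n) * \<alpha> - 1 / n = (h - 1) / (n + h)"
      unfolding al using q npos by (simp add: field_simps)
    show ?thesis unfolding \<beta>_def n_def[symmetric] e unfolding al by (simp add: power2_eq_square)
  qed
  define Dn where "Dn = 1 + (1 + 1 / n) * \<alpha>"
  have Dnpos: "Dn > 0" unfolding Dn_def al using npos by (simp add: add_pos_pos)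
  have nu: "nu_r N Nh p0 (r + 1) k =
            (p0 k / n) * ((1 + 2 * \<alpha> - (1 - 1 / n) * \<alpha> * \<beta> ^ r) / Dn)
            + (1 - 1 / n) * (p0 k)^2 * ((1 + \<alpha> + (\<alpha> / n) * \<beta> ^ r) / Dn)" for r k
    using main_nu[OF assms(2,3) pv, where r=r and k=k] alg_nu[OF npos, where p="p0 k" and B="\<beta>^r"]
    unfolding Dn_def al beq n_def h_def by simp
  have finP: "finite (set_pmf (proc N Nh p0 r))" for r
    unfolding proc_def set_bind_pmf
  proof (rule finite_UN_I[OF fin_rep])
    fix zs assume "zs \<in> set_pmf (replicate_pmf N (token_pmf p0))"
    then have "length zs = N" by (simp add: set_replicate_pmf)
    then show "finite (set_pmf (cond_proc N Nh zs r))" using cond_supp[OF _ assms(2)] by blast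
  qed
  have S: "S_r N Nh p0 (r + 1) = (\<Sum>k\<in>UNIV. nu_r N Nh p0 (r + 1) k)" for r
    unfolding S_r_def nu_r_def
    by (rule Bochner_Integration.integral_sum) (simp add: integrable_measure_pmf_finite finP)
  have S2: "S_r N Nh p0 (r + 1) =
      ((1 / n) * (1 + 2 * \<alpha>) + (1 - 1 / n) * (1 + \<alpha>) * S0) / Dn
      - (1 / n) * (1 - 1 / n) * ((1 - S0) * \<alpha> * \<beta> ^ r) / Dn" for r
  proof -
    have "S_r N Nh p0 (r + 1) = (\<Sum>k\<in>UNIV. p0 k) * ((1 / n) * ((1 + 2 * \<alpha> - (1 - 1 / n) * \<alpha> * \<beta> ^ r) / Dn))
        + S0 * ((1 - 1 / n) * ((1 + \<alpha> + (\<alpha> / n) * \<beta> ^ r) / Dn))"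
      unfolding S nu S0_def sum_distrib_right sum.distrib[symmetric]
      by (rule sum.cong) (use Dnpos npos in \<open>simp_all add: field_simps\<close>)
    also have "\<dots> = ((1 / n) * (1 + 2 * \<alpha>) + (1 - 1 / n) * (1 + \<alpha>) * S0) / Dn
      - (1 / n) * (1 - 1 / n) * ((1 - S0) * \<alpha> * \<beta> ^ r) / Dn"
      using assms(5) Dnpos npos by (simp add: field_simps)
    finally show ?thesis .
  qed
  have B: "N > 1 \<and> Nh > 1 \<longrightarrow> 0 < \<beta> \<and> \<beta> < 1"
  proof
    assume "N > 1 \<and> Nh > 1"
    then have h1: "h > 1" by (simp add: h_def)
    have p: "0 < h * (h - 1)" using h1 by simp
    have q: "0 < h + (n * n + h * (n * 2))" using npos by (intro add_pos_pos mult_pos_pos; simp)+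
    have "h * (h - 1) < (n + h)^2" using q by (simp add: power2_eq_square algebra_simps)
    then show "0 < \<beta> \<and> \<beta> < 1" unfolding beq using p npos by simp
  qed
  show ?thesis using S2 nu B unfolding Dn_def n_def by simp
qed

end
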